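(* Let $R$ be a commutative Noetherian ring, $M$ a finitely generated $R$-module, $X \subseteq \mathrm{Spec}(R)$ a basic set, and $\mathscr{E}$ an $R$-submodule of $\mathrm{Hom}_R(M,R)$. For any subset $S \subseteq M$ and any integer $t \in \mathbb{N}$, the set $Y_t := \{\mathfrak{p} \in X \mid \delta^{\mathscr{E}}_\mathfrak{p}(S,M) \leq t\}$ is closed in $X$ (with the subspace Zariski topology).
   Context: A subset $X \subseteq \mathrm{Spec}(R)$ is basic if, whenever the intersection of a family of primes in $X$ is a prime ideal, that intersection belongs to $X$. $\mathscr{E}_\mathfrak{p}$ is viewed inside $\mathrm{Hom}_{R_\mathfrak{p}}(M_\mathfrak{p},R_\mathfrak{p})$. A free $\mathscr{E}_\mathfrak{p}$-summand of $M_\mathfrak{p}$ is a direct summand $F$ (with complement $G$) of $M_\mathfrak{p}$, $F \cong R_\mathfrak{p}^n$, such that each coordinate of the projection $M_\mathfrak{p} \to F \cong R_\mathfrak{p}^n$ along $G$ lies in $\mathscr{E}_\mathfrak{p}$. With $\langle S\rangle$ the submodule generated by $S$, $\delta^{\mathscr{E}}_\mathfrak{p}(S,M)$ is the largest integer $n \ge 0$ such that there exists a free $\mathscr{E}_\mathfrak{p}$-summand of $M_\mathfrak{p}$ of rank $n$ contained in $\langle S\rangle_\mathfrak{p}$. *)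

theory Defs
  imports Complex_Main
begin

definition is_ideal :: "'a::comm_ring_1 set \<Rightarrow> bool" where
  "is_ideal I \<longleftrightarrow> module.subspace ((*) :: 'a \<Rightarrow> 'a \<Rightarrow> 'a) I"

definition noetherian_ring :: "'a::comm_ring_1 itself \<Rightarrow> bool" where
  "noetherian_ring _ \<longleftrightarrow>
     (\<forall>I :: 'a set. is_ideal I \<longrightarrow> (\<exists>F. finite F \<and> I = module.span (*) F))"

definition prime_ideal :: "'a::comm_ring_1 set \<Rightarrow> bool" where
  "prime_ideal P \<longleftrightarrow> is_ideal P \<and> P \<noteq> UNIV \<and> (\<forall>a b. a * b \<in> P \<longrightarrow> a \<in> P \<or> b \<in> P)"

definition Spec :: "'a::comm_ring_1 set set" where
  "Spec = {P. prime_ideal P}"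

text \<open>Zariski-closed subsets of Spec are the sets V(J) = {p. J \<subseteq> p}; a subset Y of X is
 closed in the subspace topology of X iff Y = X \<inter> V(J) for some J.\<close>
definition zariski_closed_in :: "'a::comm_ring_1 set set \<Rightarrow> 'a set set \<Rightarrow> bool" where
  "zariski_closed_in X Y \<longleftrightarrow> (\<exists>J :: 'a set. Y = {p \<in> X. J \<subseteq> p})"

definition basic_set :: "'a::comm_ring_1 set set \<Rightarrow> bool" where
  "basic_set X \<longleftrightarrow> X \<subseteq> Spec \<and>
     (\<forall>F. F \<subseteq> X \<longrightarrow> prime_ideal (\<Inter>F) \<longrightarrow> \<Inter>F \<in> X)"

definition finitely_generated :: "('a::comm_ring_1 \<Rightarrow> 'm::ab_group_add \<Rightarrow> 'm) \<Rightarrow> bool" where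
  "finitely_generated scale \<longleftrightarrow> (\<exists>F. finite F \<and> module.span scale F = UNIV)"

definition dual_submodule ::
  "('a::comm_ring_1 \<Rightarrow> 'm::ab_group_add \<Rightarrow> 'm) \<Rightarrow> ('m \<Rightarrow> 'a) set \<Rightarrow> bool" where
  "dual_submodule scale E \<longleftrightarrow>
     E \<subseteq> {f. module_hom scale (*) f} \<and> (\<lambda>_. 0) \<in> E \<and>
     (\<forall>f\<in>E. \<forall>g\<in>E. (\<lambda>m. f m + g m) \<in> E) \<and>
     (\<forall>r. \<forall>f\<in>E. (\<lambda>m. r * f m) \<in> E)"

definition loc_rel :: "('a::comm_ring_1 \<Rightarrow> 'm::ab_group_add \<Rightarrow> 'm) \<Rightarrow> 'a set \<Rightarrow> (('m \<times> 'a) \<times> ('m \<times> 'a)) set" where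
  "loc_rel scale p = {((m, s), (m', s')). s \<notin> p \<and> s' \<notin> p \<and>
      (\<exists>u. u \<notin> p \<and> scale u (scale s' m - scale s m') = 0)}"

definition frac :: "('a::comm_ring_1 \<Rightarrow> 'm::ab_group_add \<Rightarrow> 'm) \<Rightarrow> 'a set \<Rightarrow> 'm \<Rightarrow> 'a \<Rightarrow> ('m \<times> 'a) set" where
  "frac scale p m s = loc_rel scale p `` {(m, s)}"

text \<open>The carrier of M_p (for scale = (*) this is R_p).\<close>
definition loc :: "('a::comm_ring_1 \<Rightarrow> 'm::ab_group_add \<Rightarrow> 'm) \<Rightarrow> 'a set \<Rightarrow> ('m \<times> 'a) set set" where
  "loc scale p = {frac scale p m s | m s. s \<notin> p}"

definition loc_rep :: "('a::comm_ring_1 \<Rightarrow> 'm::ab_group_add \<Rightarrow> 'm) \<Rightarrow> 'a set \<Rightarrow> ('m \<times> 'a) set \<Rightarrow> 'm \<times> 'a" where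
  "loc_rep scale p x = (SOME (m, s). s \<notin> p \<and> x = frac scale p m s)"

definition loc_zero :: "('a::comm_ring_1 \<Rightarrow> 'm::ab_group_add \<Rightarrow> 'm) \<Rightarrow> 'a set \<Rightarrow> ('m \<times> 'a) set" where
  "loc_zero scale p = frac scale p 0 1"

definition loc_add :: "('a::comm_ring_1 \<Rightarrow> 'm::ab_group_add \<Rightarrow> 'm) \<Rightarrow> 'a set \<Rightarrow>
    ('m \<times> 'a) set \<Rightarrow> ('m \<times> 'a) set \<Rightarrow> ('m \<times> 'a) set" where
  "loc_add scale p x y =
     (case loc_rep scale p x of (m, s) \<Rightarrow> case loc_rep scale p y of (n, t) \<Rightarrow>
        frac scale p (scale t m + scale s n) (s * t))"

definition loc_smul :: "('a::comm_ring_1 \<Rightarrow> 'm::ab_group_add \<Rightarrow> 'm) \<Rightarrow> 'a set \<Rightarrow>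
    ('a \<times> 'a) set \<Rightarrow> ('m \<times> 'a) set \<Rightarrow> ('m \<times> 'a) set" where
  "loc_smul scale p a x =
     (case loc_rep (*) p a of (r, u) \<Rightarrow> case loc_rep scale p x of (m, s) \<Rightarrow>
        frac scale p (scale r m) (u * s))"

definition loc_submodule :: "('a::comm_ring_1 \<Rightarrow> 'm::ab_group_add \<Rightarrow> 'm) \<Rightarrow> 'a set \<Rightarrow>
    ('m \<times> 'a) set set \<Rightarrow> bool" where
  "loc_submodule scale p N \<longleftrightarrow> N \<subseteq> loc scale p \<and> loc_zero scale p \<in> N \<and>
     (\<forall>x\<in>N. \<forall>y\<in>N. loc_add scale p x y \<in> N) \<and>
     (\<forall>a\<in>loc (*) p. \<forall>x\<in>N. loc_smul scale p a x \<in> N)"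

primrec loc_lincomb :: "('a::comm_ring_1 \<Rightarrow> 'm::ab_group_add \<Rightarrow> 'm) \<Rightarrow> 'a set \<Rightarrow>
    (nat \<Rightarrow> ('a \<times> 'a) set) \<Rightarrow> (nat \<Rightarrow> ('m \<times> 'a) set) \<Rightarrow> nat \<Rightarrow> ('m \<times> 'a) set" where
  "loc_lincomb scale p a b 0 = loc_zero scale p"
| "loc_lincomb scale p a b (Suc n) =
     loc_add scale p (loc_lincomb scale p a b n) (loc_smul scale p (a n) (b n))"

text \<open>E_p viewed inside Hom_{R_p}(M_p, R_p): the maps m/u \<mapsto> f(m)/(s u) with f \<in> E, s \<notin> p.
 Only the values on the carrier of M_p matter.\<close>
definition loc_dual :: "('a::comm_ring_1 \<Rightarrow> 'm::ab_group_add \<Rightarrow> 'm) \<Rightarrow> 'a set \<Rightarrow> ('m \<Rightarrow> 'a) set \<Rightarrow>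
    (('m \<times> 'a) set \<Rightarrow> ('a \<times> 'a) set) set" where
  "loc_dual scale p E = {\<phi>. \<exists>f\<in>E. \<exists>s. s \<notin> p \<and>
      (\<forall>m u. u \<notin> p \<longrightarrow> \<phi> (frac scale p m u) = frac (*) p (f m) (s * u))}"

definition loc_span :: "('a::comm_ring_1 \<Rightarrow> 'm::ab_group_add \<Rightarrow> 'm) \<Rightarrow> 'a set \<Rightarrow> 'm set \<Rightarrow> ('m \<times> 'a) set set" where
  "loc_span scale p S = {frac scale p m u | m u. m \<in> module.span scale S \<and> u \<notin> p}"

text \<open>F is a free E_p-summand of M_p of rank n: F \<oplus> G = M_p, F \<cong> R_p^n via the basis b
 (a \<mapsto> \<Sum> a_i b_i is a bijection R_p^n \<rightarrow> F), and the i-th coordinate of the projection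
 M_p \<rightarrow> F \<cong> R_p^n along G is a map \<phi> i lying in E_p.\<close>
definition free_E_summand :: "('a::comm_ring_1 \<Rightarrow> 'm::ab_group_add \<Rightarrow> 'm) \<Rightarrow> 'a set \<Rightarrow> ('m \<Rightarrow> 'a) set \<Rightarrow>
    nat \<Rightarrow> ('m \<times> 'a) set set \<Rightarrow> bool" where
  "free_E_summand scale p E n F \<longleftrightarrow>
    (\<exists>G b \<phi>.
       loc_submodule scale p F \<and> loc_submodule scale p G \<and>
       F \<inter> G = {loc_zero scale p} \<and>
       (\<forall>x\<in>loc scale p. \<exists>y\<in>F. \<exists>z\<in>G. x = loc_add scale p y z) \<and>
       (\<forall>i<n. b i \<in> F) \<and>
       (\<forall>y\<in>F. \<exists>a. (\<forall>i<n. a i \<in> loc (*) p) \<and> y = loc_lincomb scale p a b n) \<and>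
       (\<forall>a a'. (\<forall>i<n. a i \<in> loc (*) p \<and> a' i \<in> loc (*) p) \<longrightarrow>
           loc_lincomb scale p a b n = loc_lincomb scale p a' b n \<longrightarrow> (\<forall>i<n. a i = a' i)) \<and>
       (\<forall>i<n. \<phi> i \<in> loc_dual scale p E) \<and>
       (\<forall>x\<in>loc scale p. \<forall>y\<in>F. \<forall>z\<in>G. x = loc_add scale p y z \<longrightarrow>
           y = loc_lincomb scale p (\<lambda>i. \<phi> i x) b n))"

definition delta :: "('a::comm_ring_1 \<Rightarrow> 'm::ab_group_add \<Rightarrow> 'm) \<Rightarrow> ('m \<Rightarrow> 'a) set \<Rightarrow> 'a set \<Rightarrow>
    'm set \<Rightarrow> nat" where
  "delta scale E p S = (GREATEST n. \<exists>F. free_E_summand scale p E n F \<and> F \<subseteq> loc_span scale p S)"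

end

theory Submission
  imports Defs "Jordan_Normal_Form.Determinant"
begin

hide_const (open) Module.module Module.submodule



lemma module_mult: "module ((*) :: 'a::comm_ring_1 \<Rightarrow> 'a \<Rightarrow> 'a)"
  by standard (simp_all add: algebra_simps)

locale lp =
  fixes scale :: "'a::comm_ring_1 \<Rightarrow> 'm::ab_group_add \<Rightarrow> 'm" and p :: "'a set"
  assumes md: "module scale" and pr: "prime_ideal p"
begin

lemma ideal_p: "module.subspace ((*) :: 'a \<Rightarrow> 'a \<Rightarrow> 'a) p"
  using pr unfolding prime_ideal_def is_ideal_def by auto

lemma mult_in: "a \<in> p \<Longrightarrow> b * a \<in> p"
  using module.subspace_scale[OF module_mult ideal_p] by blast

lemma zero_in: "0 \<in> p"
  using module.subspace_0[OF module_mult ideal_p] by blast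

lemma one_notin: "1 \<notin> p"
proof
  assume "1 \<in> p"
  then have "x \<in> p" for x using mult_in[of 1 x] by simp
  then show False using pr unfolding prime_ideal_def by auto
qed

lemma notin_mult: "s \<notin> p \<Longrightarrow> t \<notin> p \<Longrightarrow> s * t \<notin> p"
  using pr unfolding prime_ideal_def by blast

lemma sc_distr: "scale a (x + y) = scale a x + scale a y"
  "scale (a + b) x = scale a x + scale b x"
  "scale a (scale b x) = scale (a * b) x" "scale 1 x = x"
  "scale a (x - y) = scale a x - scale a y"
  "scale (a - b) x = scale a x - scale b x"
  "scale a 0 = 0" "scale 0 x = 0"
  "scale a (- x) = - scale a x" "scale (- a) x = - scale a x"
  "scale a (sum f A) = (\<Sum>i\<in>A. scale a (f i))"
  "scale (sum g A) x = (\<Sum>i\<in>A. scale (g i) x)"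
  using md by (simp_all add: module.scale_right_distrib module.scale_left_distrib
      module.scale_right_diff_distrib module.scale_left_diff_distrib
      module.scale_sum_right module.scale_sum_left module.scale_scale module.scale_one
      module.scale_zero_left module.scale_zero_right module.scale_minus_left module.scale_minus_right)

lemma rel_iff: "((m,s),(m',s')) \<in> loc_rel scale p \<longleftrightarrow>
   s \<notin> p \<and> s' \<notin> p \<and> (\<exists>u. u \<notin> p \<and> scale u (scale s' m - scale s m') = 0)"
  unfolding loc_rel_def by auto

lemma rel_refl: "s \<notin> p \<Longrightarrow> ((m,s),(m,s)) \<in> loc_rel scale p"
  unfolding rel_iff using one_notin by (auto intro!: exI[of _ 1] simp: sc_distr)

lemma rel_sym: "((m,s),(m',s')) \<in> loc_rel scale p \<Longrightarrow> ((m',s'),(m,s)) \<in> loc_rel scale p"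
  unfolding rel_iff
proof (elim conjE exE, intro conjI, assumption+)
  fix u assume "u \<notin> p" "scale u (scale s' m - scale s m') = 0"
  then show "\<exists>u. u \<notin> p \<and> scale u (scale s m' - scale s' m) = 0"
    by (intro exI[of _ u]) (metis minus_diff_eq neg_equal_0_iff_equal sc_distr(9))
qed

lemma rel_trans: "((m,s),(m',s')) \<in> loc_rel scale p \<Longrightarrow> ((m',s'),(m'',s'')) \<in> loc_rel scale p
   \<Longrightarrow> ((m,s),(m'',s'')) \<in> loc_rel scale p"
  unfolding rel_iff
proof (elim conjE exE, intro conjI, assumption+)
  fix u v assume u: "u \<notin> p" "scale u (scale s' m - scale s m') = 0"
    and v: "v \<notin> p" "scale v (scale s'' m' - scale s' m'') = 0" and s': "s' \<notin> p"
  have id: "scale s' (scale s'' m - scale s m'') = scale s'' (scale s' m - scale s m') + scale s (scale s'' m' - scale s' m'')"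
    by (simp add: sc_distr mult.commute)
  have "scale (u * v * s') (scale s'' m - scale s m'') = 0"
  proof -
    have "scale (u * v * s') (scale s'' m - scale s m'') = scale (u*v) (scale s' (scale s'' m - scale s m''))"
      by (simp add: sc_distr mult_ac)
    also have "\<dots> = scale (v * s'') (scale u (scale s' m - scale s m')) + scale (u * s) (scale v (scale s'' m' - scale s' m''))"
      unfolding id by (simp only: sc_distr(1,3) mult_ac)
    also have "\<dots> = 0" using u v by (simp add: sc_distr)
    finally show ?thesis .
  qed
  moreover have "u * v * s' \<notin> p" using u v s' notin_mult by blast
  ultimately show "\<exists>u. u \<notin> p \<and> scale u (scale s'' m - scale s m'') = 0" by blast
qed

lemma frac_eq: "s \<notin> p \<Longrightarrow> s' \<notin> p \<Longrightarrow> frac scale p m s = frac scale p m' s' \<longleftrightarrow>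
   (\<exists>u. u \<notin> p \<and> scale u (scale s' m - scale s m') = 0)"
proof
  assume s: "s \<notin> p" "s' \<notin> p" and e: "frac scale p m s = frac scale p m' s'"
  have "(m',s') \<in> frac scale p m' s'" unfolding frac_def using rel_refl[OF s(2)] by auto
  then have "((m,s),(m',s')) \<in> loc_rel scale p" using e unfolding frac_def by auto
  then show "\<exists>u. u \<notin> p \<and> scale u (scale s' m - scale s m') = 0" unfolding rel_iff by blast
next
  assume s: "s \<notin> p" "s' \<notin> p" and "\<exists>u. u \<notin> p \<and> scale u (scale s' m - scale s m') = 0"
  then have r: "((m,s),(m',s')) \<in> loc_rel scale p" unfolding rel_iff by blast
  show "frac scale p m s = frac scale p m' s'"
    unfolding frac_def
  proof safe
    fix a b assume "((m,s),(a,b)) \<in> loc_rel scale p"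
    then show "((m',s'),(a,b)) \<in> loc_rel scale p" using rel_trans rel_sym r by blast
  next
    fix a b assume "((m',s'),(a,b)) \<in> loc_rel scale p"
    then show "((m,s),(a,b)) \<in> loc_rel scale p" using rel_trans r by blast
  qed
qed

lemma frac_eqI: "s \<notin> p \<Longrightarrow> s' \<notin> p \<Longrightarrow> scale s' m = scale s m' \<Longrightarrow> frac scale p m s = frac scale p m' s'"
  using frac_eq one_notin by (auto intro!: exI[of _ 1] simp: sc_distr)

lemma frac_in_loc: "s \<notin> p \<Longrightarrow> frac scale p m s \<in> loc scale p"
  unfolding loc_def by blast

lemma loc_cases: "x \<in> loc scale p \<Longrightarrow> (\<And>m s. s \<notin> p \<Longrightarrow> x = frac scale p m s \<Longrightarrow> P) \<Longrightarrow> P"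
  unfolding loc_def by blast

lemma rep_frac: assumes "s \<notin> p" "loc_rep scale p (frac scale p m s) = (m0, s0)"
  shows "s0 \<notin> p" "frac scale p m0 s0 = frac scale p m s"
proof -
  have "\<exists>q. (case q of (a, b) \<Rightarrow> b \<notin> p \<and> frac scale p m s = frac scale p a b)"
    using assms(1) by (intro exI[of _ "(m,s)"]) auto
  from someI_ex[OF this] assms(2) show "s0 \<notin> p" "frac scale p m0 s0 = frac scale p m s"
    unfolding loc_rep_def by auto
qed


end


context lp begin
lemma R: "lp (*) p"
  by (rule lp.intro[OF module_mult pr])

lemma add_wd:
  assumes s: "s \<notin> p" "s' \<notin> p" "t \<notin> p" "t' \<notin> p"
    and e1: "frac scale p m s = frac scale p m' s'" and e2: "frac scale p n t = frac scale p n' t'"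
  shows "frac scale p (scale t m + scale s n) (s*t) = frac scale p (scale t' m' + scale s' n') (s'*t')"
proof -
  obtain u where u: "u \<notin> p" "scale u (scale s' m - scale s m') = 0" using e1 frac_eq s by blast
  obtain v where v: "v \<notin> p" "scale v (scale t' n - scale t n') = 0" using e2 frac_eq s by blast
  have id: "scale (s'*t') (scale t m + scale s n) - scale (s*t) (scale t' m' + scale s' n')
     = scale (t*t') (scale s' m - scale s m') + scale (s*s') (scale t' n - scale t n')"
    apply (simp only: sc_distr(1,3,5))
    apply (simp only: mult_ac)
    apply (simp add: algebra_simps)
    done
  have "scale (u*v) (scale (s'*t') (scale t m + scale s n) - scale (s*t) (scale t' m' + scale s' n')) = 0"
  proof -
    have 1: "scale (u*v) (scale (t*t') (scale s' m - scale s m')) = scale (v*t*t') (scale u (scale s' m - scale s m'))"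
      by (simp only: sc_distr(3) mult_ac)
    have 2: "scale (u*v) (scale (s*s') (scale t' n - scale t n')) = scale (u*s*s') (scale v (scale t' n - scale t n'))"
      by (simp only: sc_distr(3) mult_ac)
    show ?thesis apply (subst id) apply (simp only: sc_distr(1) 1 2 u(2) v(2) sc_distr(7)) by simp
  qed
  moreover have "u*v \<notin> p" using u v notin_mult by blast
  ultimately show ?thesis using frac_eq s notin_mult by blast
qed

lemma add_frac: assumes "s \<notin> p" "t \<notin> p"
  shows "loc_add scale p (frac scale p m s) (frac scale p n t) = frac scale p (scale t m + scale s n) (s*t)"
proof -
  obtain m0 s0 where a: "loc_rep scale p (frac scale p m s) = (m0, s0)" by fastforce
  obtain n0 t0 where b: "loc_rep scale p (frac scale p n t) = (n0, t0)" by fastforce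
  note ra = rep_frac[OF assms(1) a] and rb = rep_frac[OF assms(2) b]
  show ?thesis unfolding loc_add_def a b
    using add_wd[OF ra(1) assms(1) rb(1) assms(2) ra(2) rb(2)] by simp
qed

lemma smul_wd:
  assumes s: "s \<notin> p" "s' \<notin> p" "w \<notin> p" "w' \<notin> p"
    and e1: "frac (*) p r w = frac (*) p r' w'" and e2: "frac scale p m s = frac scale p m' s'"
  shows "frac scale p (scale r m) (w*s) = frac scale p (scale r' m') (w'*s')"
proof -
  obtain u where u: "u \<notin> p" "u * (w' * r - w * r') = 0" using e1 lp.frac_eq[OF R] s by blast
  obtain v where v: "v \<notin> p" "scale v (scale s' m - scale s m') = 0" using e2 frac_eq s by blast
  have id: "scale (w'*s') (scale r m) - scale (w*s) (scale r' m')
     = scale (s' * (w' * r - w * r')) m + scale (w*r') (scale s' m - scale s m')"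
    apply (simp only: sc_distr(1,3,5,6))
    apply (simp only: mult_ac)
    apply (simp add: algebra_simps)
    apply (simp add: sc_distr(6))
    done
  have "scale (u*v) (scale (w'*s') (scale r m) - scale (w*s) (scale r' m')) = 0"
  proof -
    have "scale (u*v) (scale (s' * (w' * r - w * r')) m) = scale (v*s'*(u * (w' * r - w * r'))) m"
      by (simp only: sc_distr(3) mult_ac)
    also have "\<dots> = 0" using u by (simp add: sc_distr)
    finally have 1: "scale (u*v) (scale (s' * (w' * r - w * r')) m) = 0" .
    have "scale (u*v) (scale (w*r') (scale s' m - scale s m')) = scale (u*w*r') (scale v (scale s' m - scale s m'))"
      by (simp only: sc_distr(3) mult_ac)
    also have "\<dots> = 0" using v by (simp add: sc_distr)
    finally have 2: "scale (u*v) (scale (w*r') (scale s' m - scale s m')) = 0" .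
    show ?thesis apply (subst id) apply (simp only: sc_distr(1) 1 2) by simp
  qed
  moreover have "u*v \<notin> p" using u v notin_mult by blast
  ultimately show ?thesis using frac_eq s notin_mult by blast
qed

lemma smul_frac: assumes "w \<notin> p" "s \<notin> p"
  shows "loc_smul scale p (frac (*) p r w) (frac scale p m s) = frac scale p (scale r m) (w*s)"
proof -
  obtain r0 w0 where a: "loc_rep (*) p (frac (*) p r w) = (r0, w0)" by fastforce
  obtain m0 s0 where b: "loc_rep scale p (frac scale p m s) = (m0, s0)" by fastforce
  note ra = lp.rep_frac[OF R assms(1) a] and rb = rep_frac[OF assms(2) b]
  show ?thesis unfolding loc_smul_def a b
    using smul_wd[OF rb(1) assms(2) ra(1) assms(1) ra(2) rb(2)] by simp
qed

lemma zero_frac: "loc_zero scale p = frac scale p 0 1"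
  unfolding loc_zero_def ..

lemma frac_zero_any: "s \<notin> p \<Longrightarrow> frac scale p 0 s = frac scale p 0 1"
  by (rule frac_eqI) (use one_notin in \<open>auto simp: sc_distr\<close>)

lemma frac_cancel: "s \<notin> p \<Longrightarrow> u \<notin> p \<Longrightarrow> frac scale p (scale u m) (u*s) = frac scale p m s"
  by (rule frac_eqI) (use notin_mult in \<open>auto simp: sc_distr mult_ac\<close>)

end



lemma det_notin:
  assumes pr: "prime_ideal p" and W: "W \<notin> p" and c: "\<forall>i<n. c i \<notin> p"
    and A: "\<forall>i<n. \<forall>j<n. W * A i j = (if i = j then W * c i else 0)"
  shows "det (mat n n (\<lambda>(i,j). A i j)) \<notin> p"
proof
  interpret lp "(*)" p by (rule lp.intro[OF module_mult pr])
  let ?M = "mat n n (\<lambda>(i,j). A i j)"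
  let ?D = "mat n n (\<lambda>(i,j). if i = j then W * c i else 0)"
  have eq: "W \<cdot>\<^sub>m ?M = ?D" using A by (intro eq_matI) auto
  have "det ?D = prod_list (diag_mat ?D)"
    by (rule det_upper_triangular[of _ n]) (auto simp: upper_triangular_def)
  also have "\<dots> = (\<Prod>i = 0..<n. W * c i)" unfolding prod_list_diag_prod by simp
  finally have dD: "det ?D = (\<Prod>i = 0..<n. W * c i)" .
  have notin: "(\<Prod>i \<in> I. W * c i) \<notin> p" if "I \<subseteq> {0..<n}" "finite I" for I
    using that(2,1)
  proof (induction I rule: finite_induct)
    case empty then show ?case using one_notin by simp
  next
    case (insert x F) then show ?case using c W notin_mult by auto
  qed
  assume "det ?M \<in> p"
  then have "W ^ n * det ?M \<in> p" by (rule mult_in)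
  then have "det (W \<cdot>\<^sub>m ?M) \<in> p" by simp
  then show False using eq dD notin[of "{0..<n}"] by simp
qed


lemma det_zero_big:
  assumes md: "module scale" and fG: "finite G0" and sp: "module.span scale G0 = UNIV"
    and hom: "\<forall>i<n. module_hom scale (*) (f i)" and big: "card G0 < n"
  shows "det (mat n n (\<lambda>(i,j). f i (m j))) = 0"
proof -
  let ?k = "card G0"
  obtain g where g: "bij_betw g {0..<?k} G0" using ex_bij_betw_nat_finite[OF fG] by blast
  have "\<exists>c. m j = (\<Sum>v\<in>G0. scale (c v) v)" for j
  proof -
    have "m j \<in> range (\<lambda>u. \<Sum>v\<in>G0. scale (u v) v)"
      unfolding module.span_finite[OF md fG, symmetric] sp by (rule UNIV_I)
    then show ?thesis by blast
  qed
  then obtain c where c: "\<And>j. m j = (\<Sum>v\<in>G0. scale (c j v) v)" by metis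
  have c2: "m j = (\<Sum>l\<in>{0..<?k}. scale (c j (g l)) (g l))" for j
    unfolding c by (rule sum.reindex_bij_betw[OF g, symmetric])
  have fm: "f i (m j) = (\<Sum>l\<in>{0..<?k}. f i (g l) * c j (g l))" if "i < n" for i j
  proof -
    interpret h: module_hom scale "(*)" "f i" using hom that by auto
    show ?thesis unfolding c2 h.sum h.scale by (simp add: mult.commute)
  qed
  let ?B = "mat n n (\<lambda>(i,l). if l < ?k then f i (g l) else 0)"
  let ?C = "mat n n (\<lambda>(l,j). if l < ?k then c j (g l) else 0)"
  have BC: "mat n n (\<lambda>(i,j). f i (m j)) = ?B * ?C"
  proof (rule eq_matI)
    fix i j assume ij0: "i < dim_row (?B * ?C)" "j < dim_col (?B * ?C)"
    then have ij: "i < n" "j < n" by simp_all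
    have "(?B * ?C) $$ (i,j) = (\<Sum>l = 0..<n. ?B $$ (i,l) * ?C $$ (l,j))"
      using ij by (simp add: scalar_prod_def)
    also have "\<dots> = (\<Sum>l = 0..<n. if l < ?k then f i (g l) * c j (g l) else 0)"
      by (rule sum.cong) (simp_all add: ij)
    also have "\<dots> = (\<Sum>l \<in> {0..<?k}. f i (g l) * c j (g l))"
    proof -
      have se: "{0..<n} \<inter> {l. l < ?k} = {0..<?k}" using big by auto
      show ?thesis by (simp add: sum.If_cases se)
    qed
    finally show "mat n n (\<lambda>(i,j). f i (m j)) $$ (i,j) = (?B * ?C) $$ (i,j)"
      using ij fm by simp
  qed (simp_all)
  have C0: "?C = mat\<^sub>r n n (\<lambda>l. if l = ?k then 0\<^sub>v n else row ?C l)"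
    by (rule eq_matI) auto
  have "det (mat\<^sub>r n n (\<lambda>l. if l = ?k then 0\<^sub>v n else row ?C l)) = 0"
    by (rule det_row_0[OF big]) auto
  then have dC: "det ?C = 0" using arg_cong[OF C0, of det] by simp
  have "det (?B * ?C) = det ?B * det ?C"
    by (rule det_mult) auto
  then show ?thesis unfolding BC dC by simp
qed


context lp begin

lemma prod_notin: "finite I \<Longrightarrow> (\<forall>x\<in>I. g x \<notin> p) \<Longrightarrow> prod g I \<notin> p"
  by (induction I rule: finite_induct) (auto simp: one_notin notin_mult)

lemma zero_in_loc: "loc_zero scale p \<in> loc scale p"
  unfolding zero_frac using frac_in_loc one_notin by blast

lemma add_in: "x \<in> loc scale p \<Longrightarrow> y \<in> loc scale p \<Longrightarrow> loc_add scale p x y \<in> loc scale p"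
  by (elim loc_cases) (simp add: add_frac frac_in_loc notin_mult)

lemma smul_in: "a \<in> loc (*) p \<Longrightarrow> x \<in> loc scale p \<Longrightarrow> loc_smul scale p a x \<in> loc scale p"
  by (elim loc_cases lp.loc_cases[OF R]) (simp add: smul_frac frac_in_loc notin_mult)

lemma add_zero_r: "x \<in> loc scale p \<Longrightarrow> loc_add scale p x (loc_zero scale p) = x"
  by (elim loc_cases) (simp add: zero_frac add_frac one_notin sc_distr)

lemma add_zero_l: "x \<in> loc scale p \<Longrightarrow> loc_add scale p (loc_zero scale p) x = x"
  by (elim loc_cases) (simp add: zero_frac add_frac one_notin sc_distr)

lemma smul_one: "x \<in> loc scale p \<Longrightarrow> loc_smul scale p (frac (*) p 1 1) x = x"
  by (elim loc_cases) (simp add: smul_frac one_notin sc_distr)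

lemma smul_zero: "x \<in> loc scale p \<Longrightarrow> loc_smul scale p (frac (*) p 0 1) x = loc_zero scale p"
proof (elim loc_cases)
  fix m s assume s: "s \<notin> p" and x: "x = frac scale p m s"
  have "loc_smul scale p (frac (*) p 0 1) x = frac scale p 0 (1*s)"
    unfolding x by (simp add: smul_frac one_notin s sc_distr)
  also have "\<dots> = frac scale p 0 1" by (rule frac_zero_any) (simp add: s)
  finally show ?thesis unfolding zero_frac .
qed

lemma lincomb_in: "(\<forall>i<n. a i \<in> loc (*) p) \<Longrightarrow> (\<forall>i<n. b i \<in> loc scale p) \<Longrightarrow>
   loc_lincomb scale p a b n \<in> loc scale p"
  by (induction n) (auto simp: zero_in_loc add_in smul_in)

lemma lincomb_cong: "(\<forall>i<n. a i = a' i) \<Longrightarrow> (\<forall>i<n. b i = b' i) \<Longrightarrow>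
   loc_lincomb scale p a b n = loc_lincomb scale p a' b' n"
  by (induction n) auto

lemma lincomb_delta: "(\<forall>i<n. b i \<in> loc scale p) \<Longrightarrow>
   loc_lincomb scale p (\<lambda>i. if i = j then frac (*) p 1 1 else frac (*) p 0 1) b n
   = (if j < n then b j else loc_zero scale p)"
proof (induction n)
  case 0 then show ?case by simp
next
  case (Suc n)
  then have IH: "loc_lincomb scale p (\<lambda>i. if i = j then frac (*) p 1 1 else frac (*) p 0 1) b n
   = (if j < n then b j else loc_zero scale p)" by simp
  have bn: "b n \<in> loc scale p" using Suc.prems by simp
  show ?case
  proof (cases "j < n")
    case True
    then show ?thesis using IH bn Suc.prems by (simp add: smul_zero add_zero_r)
  next
    case False
    show ?thesis
    proof (cases "j = n")
      case True
      then show ?thesis using IH bn by (simp add: smul_one add_zero_l)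
    next
      case False
      then have "\<not> j < Suc n" using \<open>\<not> j < n\<close> by simp
      then show ?thesis using IH bn False \<open>\<not> j < n\<close> by (simp add: smul_zero add_zero_l zero_in_loc)
    qed
  qed
qed

end


context lp begin

lemma extract_data:
  assumes fs: "free_E_summand scale p E n F" and FS: "F \<subseteq> loc_span scale p S"
  shows "\<exists>f m c W. (\<forall>i<n. f i \<in> E) \<and> (\<forall>j<n. m j \<in> module.span scale S) \<and> W \<notin> p \<and>
     (\<forall>i<n. c i \<notin> p) \<and> (\<forall>i<n. \<forall>j<n. W * f i (m j) = (if i = j then W * c i else 0))"
proof -
  obtain G b \<phi> where
    sF: "loc_submodule scale p F" and sG: "loc_submodule scale p G" and
    bF: "\<forall>i<n. b i \<in> F" and
    uniq: "\<forall>a a'. (\<forall>i<n. a i \<in> loc (*) p \<and> a' i \<in> loc (*) p) \<longrightarrow>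
           loc_lincomb scale p a b n = loc_lincomb scale p a' b n \<longrightarrow> (\<forall>i<n. a i = a' i)" and
    phi: "\<forall>i<n. \<phi> i \<in> loc_dual scale p E" and
    proj: "\<forall>x\<in>loc scale p. \<forall>y\<in>F. \<forall>z\<in>G. x = loc_add scale p y z \<longrightarrow>
           y = loc_lincomb scale p (\<lambda>i. \<phi> i x) b n"
    using fs unfolding free_E_summand_def by (elim exE conjE) (rule that)
  have FL: "F \<subseteq> loc scale p" and zG: "loc_zero scale p \<in> G"
    using sF sG unfolding loc_submodule_def by auto
  have "\<forall>j. \<exists>mu. j < n \<longrightarrow> b j = frac scale p (fst mu) (snd mu) \<and> fst mu \<in> module.span scale S \<and> snd mu \<notin> p"
  proof (intro allI impI)
    fix j
    show "\<exists>mu. j < n \<longrightarrow> b j = frac scale p (fst mu) (snd mu) \<and> fst mu \<in> module.span scale S \<and> snd mu \<notin> p"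
    proof (cases "j < n")
      case True
      then have "b j \<in> loc_span scale p S" using bF FS by blast
      then obtain m u where "b j = frac scale p m u" "m \<in> module.span scale S" "u \<notin> p"
        unfolding loc_span_def by blast
      then show ?thesis by (intro exI[of _ "(m,u)"]) simp
    qed simp
  qed
  from choice[OF this] obtain mu where mu0: "\<forall>j. j < n \<longrightarrow> b j = frac scale p (fst (mu j)) (snd (mu j)) \<and>
      fst (mu j) \<in> module.span scale S \<and> snd (mu j) \<notin> p"
    by blast
  note mu = mu0[rule_format]
  define m where "m j = fst (mu j)" for j
  define u where "u j = snd (mu j)" for j
  have b: "b j = frac scale p (m j) (u j)" "m j \<in> module.span scale S" "u j \<notin> p" if "j < n" for j
    using mu[OF that] unfolding m_def u_def by auto
  have "\<forall>i. \<exists>fs. i < n \<longrightarrow> fst fs \<in> E \<and> snd fs \<notin> p \<and>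
      (\<forall>m u. u \<notin> p \<longrightarrow> \<phi> i (frac scale p m u) = frac (*) p (fst fs m) (snd fs * u))"
  proof (intro allI)
    fix i
    show "\<exists>fs. i < n \<longrightarrow> fst fs \<in> E \<and> snd fs \<notin> p \<and>
      (\<forall>m u. u \<notin> p \<longrightarrow> \<phi> i (frac scale p m u) = frac (*) p (fst fs m) (snd fs * u))"
    proof (cases "i < n")
      case True
      then have "\<phi> i \<in> loc_dual scale p E" using phi by blast
      then obtain f s where "f \<in> E" "s \<notin> p"
        "\<forall>m u. u \<notin> p \<longrightarrow> \<phi> i (frac scale p m u) = frac (*) p (f m) (s * u)"
        unfolding loc_dual_def by blast
      then show ?thesis by (intro exI[of _ "(f,s)"]) simp
    qed simp
  qed
  from choice[OF this] obtain fs where fs0: "\<forall>i. i < n \<longrightarrow> fst (fs i) \<in> E \<and> snd (fs i) \<notin> p \<and>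
      (\<forall>m u. u \<notin> p \<longrightarrow> \<phi> i (frac scale p m u) = frac (*) p (fst (fs i) m) (snd (fs i) * u))"
    by blast
  note fs = fs0[rule_format]
  define f where "f i = fst (fs i)" for i
  define \<sigma> where "\<sigma> i = snd (fs i)" for i
  have f: "f i \<in> E" "\<sigma> i \<notin> p" "\<And>m u. u \<notin> p \<Longrightarrow> \<phi> i (frac scale p m u) = frac (*) p (f i m) (\<sigma> i * u)"
    if "i < n" for i
    using fs[OF that] unfolding f_def \<sigma>_def by auto
  have phib: "\<phi> i (b j) = frac (*) p (f i (m j)) (\<sigma> i * u j)" if "i < n" "j < n" for i j
    using b[OF that(2)] f[OF that(1)] by simp
  have key: "\<phi> i (b j) = (if i = j then frac (*) p 1 1 else frac (*) p 0 1)" if ij: "i < n" "j < n" for i j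
  proof -
    have bL: "\<forall>k<n. b k \<in> loc scale p" using bF FL by blast
    have bj: "b j \<in> loc scale p" "b j \<in> F" using bF FL ij by auto
    have 1: "b j = loc_lincomb scale p (\<lambda>i. \<phi> i (b j)) b n"
      using proj[rule_format, OF bj(1) bj(2) zG add_zero_r[OF bj(1), symmetric]] .
    have 2: "b j = loc_lincomb scale p (\<lambda>i. if i = j then frac (*) p 1 1 else frac (*) p 0 1) b n"
      using lincomb_delta[OF bL, of j] ij by simp
    have inl: "\<forall>i<n. \<phi> i (b j) \<in> loc (*) p \<and>
       (if i = j then frac (*) p 1 1 else frac (*) p 0 1) \<in> loc (*) p"
      using phib ij lp.frac_in_loc[OF R] f b notin_mult one_notin by simp
    have eq: "loc_lincomb scale p (\<lambda>i. \<phi> i (b j)) b n = loc_lincomb scale p (\<lambda>i. if i = j then frac (*) p 1 1 else frac (*) p 0 1) b n"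
      using 1 2 by simp
    show ?thesis using uniq[THEN spec, THEN spec, THEN mp, THEN mp, OF inl eq, rule_format, OF ij(1)] by simp
  qed
  have "\<forall>ij. \<exists>w. (fst ij < n \<and> snd ij < n) \<longrightarrow> w \<notin> p \<and>
      w * f (fst ij) (m (snd ij)) = w * (\<sigma> (fst ij) * u (snd ij) * (if fst ij = snd ij then 1 else 0))"
  proof (intro allI impI)
    fix ij :: "nat \<times> nat"
    obtain i j where ij_def: "ij = (i,j)" by fastforce
    show "\<exists>w. (fst ij < n \<and> snd ij < n) \<longrightarrow> w \<notin> p \<and>
      w * f (fst ij) (m (snd ij)) = w * (\<sigma> (fst ij) * u (snd ij) * (if fst ij = snd ij then 1 else 0))"
    proof (cases "i < n \<and> j < n")
      case True
      then have fe: "frac (*) p (f i (m j)) (\<sigma> i * u j) = frac (*) p (if i = j then 1 else 0) 1"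
      proof -
        have k: "\<phi> i (b j) = (if i = j then frac (*) p 1 1 else frac (*) p 0 1)"
          using True by (intro key) auto
        have ph: "\<phi> i (b j) = frac (*) p (f i (m j)) (\<sigma> i * u j)"
          using True by (intro phib) auto
        show ?thesis using k ph by (cases "i = j") simp_all
      qed
      have sn: "\<sigma> i * u j \<notin> p" using f(2)[of i] b(3)[of j] True by (intro notin_mult) auto
      have "\<exists>w. w \<notin> p \<and> w * (1 * f i (m j) - (\<sigma> i * u j) * (if i = j then 1 else 0)) = 0"
        by (rule lp.frac_eq[OF R sn one_notin, THEN iffD1]) (rule fe)
      then obtain w where "w \<notin> p" "w * (1 * f i (m j) - (\<sigma> i * u j) * (if i = j then 1 else 0)) = 0"
        by blast
      then show ?thesis unfolding ij_def by (intro exI[of _ w]) (simp add: algebra_simps)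
    qed (auto simp: ij_def)
  qed
  from choice[OF this] obtain w where w0: "\<forall>ij. (fst ij < n \<and> snd ij < n) \<longrightarrow> w ij \<notin> p \<and>
      w ij * f (fst ij) (m (snd ij)) = w ij * (\<sigma> (fst ij) * u (snd ij) * (if fst ij = snd ij then 1 else 0))"
    by blast
  have w: "w (i,j) \<notin> p \<and>
      w (i,j) * f i (m j) = w (i,j) * (\<sigma> i * u j * (if i = j then 1 else 0))" if "i < n" "j < n" for i j
    using w0[rule_format, of "(i,j)"] that by simp
  define I where "I = {..<n} \<times> {..<n}"
  define W where "W = prod w I"
  have fin: "finite I" unfolding I_def by simp
  have Wn: "W \<notin> p" unfolding W_def using prod_notin[OF fin] w unfolding I_def by auto
  have WA: "W * f i (m j) = (if i = j then W * (\<sigma> i * u i) else 0)" if "i < n" "j < n" for i j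
  proof -
    have inI: "(i,j) \<in> I" using that unfolding I_def by auto
    have Wd: "W = w (i,j) * prod w (I - {(i,j)})" unfolding W_def using prod.remove[OF fin inI] .
    have "W * f i (m j) = prod w (I - {(i,j)}) * (w (i,j) * f i (m j))" unfolding Wd by (simp add: mult_ac)
    also have "\<dots> = prod w (I - {(i,j)}) * (w (i,j) * (\<sigma> i * u j * (if i = j then 1 else 0)))"
      using w that by simp
    also have "\<dots> = W * (\<sigma> i * u j * (if i = j then 1 else 0))" unfolding Wd by (simp add: mult_ac)
    finally show ?thesis by simp
  qed
  show ?thesis
    apply (rule exI[of _ f], rule exI[of _ m], rule exI[of _ "\<lambda>i. \<sigma> i * u i"], rule exI[of _ W])
    using f b Wn WA notin_mult by auto
qed

end



lemma dual_zero: "dual_submodule scale E \<Longrightarrow> (\<lambda>_. 0) \<in> E"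
  unfolding dual_submodule_def by (elim conjE)

lemma dual_add: assumes "dual_submodule scale E" "f \<in> E" "g \<in> E" shows "(\<lambda>m. f m + g m) \<in> E"
proof -
  have "\<forall>f\<in>E. \<forall>g\<in>E. (\<lambda>m. f m + g m) \<in> E" using assms(1) unfolding dual_submodule_def by (elim conjE)
  then have "\<forall>g\<in>E. (\<lambda>m. f m + g m) \<in> E" using assms(2) by (rule bspec)
  then show ?thesis using assms(3) by (rule bspec)
qed

lemma dual_scale: assumes "dual_submodule scale E" "f \<in> E" shows "(\<lambda>m. r * f m) \<in> E"
proof -
  have "\<forall>r. \<forall>f\<in>E. (\<lambda>m. r * f m) \<in> E" using assms(1) unfolding dual_submodule_def by (elim conjE)
  then have "\<forall>f\<in>E. (\<lambda>m. r * f m) \<in> E" by (rule spec)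
  then show ?thesis using assms(2) by (rule bspec)
qed

lemma dual_hom: "dual_submodule scale E \<Longrightarrow> f \<in> E \<Longrightarrow> module_hom scale (*) f"
  unfolding dual_submodule_def by (elim conjE) (drule subsetD; simp)

lemma E_sum:
  assumes dE: "dual_submodule scale E" and fE: "\<forall>k<(n::nat). f k \<in> E"
  shows "(\<lambda>x. \<Sum>k\<in>{0..<n}. c k * f k x) \<in> E"
  using fE
proof (induction n)
  case 0
  then show ?case using dual_zero[OF dE] by simp
next
  case (Suc n)
  then have IH: "(\<lambda>x. \<Sum>k\<in>{0..<n}. c k * f k x) \<in> E" and fn: "f n \<in> E" by auto
  have "(\<lambda>x. (\<Sum>k\<in>{0..<n}. c k * f k x) + c n * f n x) \<in> E"
    by (rule dual_add[OF dE IH dual_scale[OF dE fn]])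
  then show ?case by simp
qed

context lp begin

lemma lincomb_common:
  assumes u: "u \<notin> p"
  shows "loc_lincomb scale p (\<lambda>j. frac (*) p (r j) u) (\<lambda>j. frac scale p (m j) 1) (n::nat)
     = frac scale p (\<Sum>j\<in>{0..<n}. scale (r j) (m j)) u"
proof (induction n)
  case 0
  then show ?case using frac_zero_any[OF u] by (simp add: zero_frac)
next
  case (Suc n)
  have "loc_lincomb scale p (\<lambda>j. frac (*) p (r j) u) (\<lambda>j. frac scale p (m j) 1) (Suc n)
     = loc_add scale p (frac scale p (\<Sum>j\<in>{0..<n}. scale (r j) (m j)) u)
         (frac scale p (scale (r n) (m n)) (u * 1))"
    using Suc by (simp add: smul_frac u one_notin)
  also have "\<dots> = frac scale p (scale (u*1) (\<Sum>j\<in>{0..<n}. scale (r j) (m j)) + scale u (scale (r n) (m n))) (u * (u * 1))"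
    by (rule add_frac) (use u one_notin notin_mult in auto)
  also have "\<dots> = frac scale p (scale u (\<Sum>j\<in>{0..<Suc n}. scale (r j) (m j))) (u * u)"
    by (simp add: sc_distr(1))
  also have "\<dots> = frac scale p (\<Sum>j\<in>{0..<Suc n}. scale (r j) (m j)) u"
    by (rule frac_cancel[OF u u])
  finally show ?case .
qed

lemma common_denom:
  "(\<forall>i<(n::nat). a i \<in> loc (*) p) \<Longrightarrow> \<exists>r u. u \<notin> p \<and> (\<forall>i<n. a i = frac (*) p (r i) u)"
proof (induction n)
  case 0
  then show ?case using one_notin by (intro exI[of _ "\<lambda>_. 0"] exI[of _ 1]) simp
next
  case (Suc n)
  then have "\<exists>r u. u \<notin> p \<and> (\<forall>i<n. a i = frac (*) p (r i) u)" by simp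
  then obtain r u where ru: "u \<notin> p" "\<forall>i<n. a i = frac (*) p (r i) u" by blast
  have "a n \<in> loc (*) p" using Suc.prems by simp
  then obtain r' u' where r': "u' \<notin> p" "a n = frac (*) p r' u'" by (elim lp.loc_cases[OF R])
  let ?r = "\<lambda>i. if i < n then r i * u' else r' * u"
  have "\<forall>i<Suc n. a i = frac (*) p (?r i) (u * u')"
  proof (intro allI impI)
    fix i assume i: "i < Suc n"
    show "a i = frac (*) p (?r i) (u * u')"
    proof (cases "i < n")
      case True
      then show ?thesis using ru lp.frac_cancel[OF R ru(1) r'(1), of "r i"]
        by (simp add: mult_ac)
    next
      case False
      then have "i = n" using i by simp
      then show ?thesis using r' lp.frac_cancel[OF R r'(1) ru(1), of r'] False
        by (simp add: mult_ac)
    qed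
  qed
  moreover have "u * u' \<notin> p" using ru r' notin_mult by blast
  ultimately show ?case by (intro exI[of _ ?r] exI[of _ "u * u'"]) simp
qed

end


context lp begin

lemma lin_scale: "scale c (\<Sum>j\<in>J. scale (r j) (mm j)) = (\<Sum>j\<in>J. scale (c * r j) (mm j))"
  by (simp only: sc_distr(11) sc_distr(3))

lemma lin_add: "scale v (\<Sum>j\<in>J. scale (r j) (mm j)) + scale u (\<Sum>j\<in>J. scale (r' j) (mm j))
   = (\<Sum>j\<in>J. scale (v * r j + u * r' j) (mm j))"
  by (simp only: sc_distr(11) sc_distr(3) sc_distr(2) sum.distrib)

lemma hom_frac:
  assumes h: "module_hom scale (*) g" and u: "u \<notin> p" "u' \<notin> p" and dp: "d \<notin> p"
    and e: "frac scale p mm u = frac scale p mm' u'"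
  shows "frac (*) p (g mm) (d * u) = frac (*) p (g mm') (d * u')"
proof -
  interpret h: module_hom scale "(*)" g by (rule h)
  obtain w where w: "w \<notin> p" "scale w (scale u' mm - scale u mm') = 0" using frac_eq[OF u] e by blast
  have "g (scale w (scale u' mm - scale u mm')) = 0" using w(2) by simp
  then have "w * (u' * g mm - u * g mm') = 0" by (simp add: h.diff h.scale)
  then have "w * ((d * u') * g mm - (d * u) * g mm') = 0"
    by (metis (no_types, lifting) mult.left_commute mult_zero_right right_diff_distrib' mult.assoc)
  then show ?thesis
    using lp.frac_eq[OF R, of "d*u" "d*u'"] w(1) u dp notin_mult by blast
qed


lemma construct:
  assumes dE: "dual_submodule scale E" and fE: "\<forall>i<n. f i \<in> E"
    and mS: "\<forall>j<n. m j \<in> module.span scale S"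
    and dn: "det (mat n n (\<lambda>(i,j). f i (m j))) \<notin> p"
  shows "\<exists>F. free_E_summand scale p E n F \<and> F \<subseteq> loc_span scale p S"
proof -
  define A where "A = mat n n (\<lambda>(i,j). f i (m j))"
  define d where "d = det A"
  define Adj where "Adj = adj_mat A"
  have Acar: "A \<in> carrier_mat n n" unfolding A_def by simp
  have adjA: "Adj * A = d \<cdot>\<^sub>m 1\<^sub>m n" unfolding Adj_def d_def by (rule adj_mat(3)[OF Acar])
  have Adjcar: "Adj \<in> carrier_mat n n" unfolding Adj_def by (rule adj_mat(1)[OF Acar])
  have dp: "d \<notin> p" using dn unfolding d_def A_def .
  define g where "g i = (\<lambda>x. \<Sum>k\<in>{0..<n}. Adj $$ (i,k) * f k x)" for i
  have gE: "g i \<in> E" for i unfolding g_def by (rule E_sum[OF dE fE])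
  have ghom: "module_hom scale (*) (g i)" for i by (rule dual_hom[OF dE gE])
  have gm: "g i (m j) = (if i = j then d else 0)" if ij: "i < n" "j < n" for i j
  proof -
    have "(Adj * A) $$ (i,j) = (\<Sum>k\<in>{0..<n}. Adj $$ (i,k) * A $$ (k,j))"
      using ij Adjcar Acar by (simp add: scalar_prod_def)
    also have "\<dots> = g i (m j)" unfolding g_def A_def
      by (rule sum.cong) (simp_all add: ij)
    finally have "g i (m j) = (Adj * A) $$ (i,j)" by simp
    also have "\<dots> = (if i = j then d else 0)" unfolding adjA using ij by simp
    finally show ?thesis .
  qed
  have gsum: "g i (\<Sum>j\<in>{0..<n}. scale (r j) (m j)) = r i * d" if i: "i < n" for i r
  proof -
    interpret h: module_hom scale "(*)" "g i" by (rule ghom)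
    have "g i (\<Sum>j\<in>{0..<n}. scale (r j) (m j)) = (\<Sum>j\<in>{0..<n}. r j * g i (m j))"
      by (simp add: h.sum h.scale)
    also have "\<dots> = (\<Sum>j\<in>{0..<n}. if j = i then r j * d else 0)"
      by (rule sum.cong) (auto simp: gm i)
    also have "\<dots> = r i * d" using i by simp
    finally show ?thesis .
  qed
  define \<phi> where "\<phi> i x = frac (*) p (g i (fst (loc_rep scale p x))) (d * snd (loc_rep scale p x))" for i x
  have phi: "\<phi> i (frac scale p mm u) = frac (*) p (g i mm) (d * u)" if u: "u \<notin> p" for i mm u
  proof -
    obtain m0 u0 where r: "loc_rep scale p (frac scale p mm u) = (m0, u0)" by fastforce
    note rr = rep_frac[OF u r]
    show ?thesis unfolding \<phi>_def r fst_conv snd_conv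
      by (rule hom_frac[OF ghom rr(1) u dp rr(2)])
  qed
  have phi_in: "\<phi> i x \<in> loc (*) p" if "x \<in> loc scale p" for i x
    using that by (elim loc_cases) (simp add: phi lp.frac_in_loc[OF R] dp notin_mult)
  have phi_add: "\<phi> i (loc_add scale p x y) = loc_add (*) p (\<phi> i x) (\<phi> i y)"
    if "x \<in> loc scale p" "y \<in> loc scale p" for i x y
    using that
  proof (elim loc_cases)
    fix m1 s1 m2 s2 assume s: "s1 \<notin> p" "s2 \<notin> p" and xy: "y = frac scale p m1 s1" "x = frac scale p m2 s2"
    note hadd = module_hom.add[OF ghom] and hsc = module_hom.scale[OF ghom]
    have ds: "d * s1 \<notin> p" "d * s2 \<notin> p" "s2 * s1 \<notin> p" "d * (s2 * s1) \<notin> p" "d * s2 * (d * s1) \<notin> p"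
      using s dp notin_mult by auto
    have "\<phi> i (loc_add scale p x y) = frac (*) p (s1 * g i m2 + s2 * g i m1) (d * (s2 * s1))"
      unfolding xy by (simp add: add_frac s phi ds hadd hsc)
    also have "\<dots> = frac (*) p ((d*s1) * g i m2 + (d*s2) * g i m1) ((d*s2)*(d*s1))"
      by (rule lp.frac_eqI[OF R ds(4) ds(5)]) (simp add: distrib_left mult_ac)
    also have "\<dots> = loc_add (*) p (frac (*) p (g i m2) (d * s2)) (frac (*) p (g i m1) (d*s1))"
      by (rule lp.add_frac[OF R ds(2) ds(1), symmetric])
    also have "\<dots> = loc_add (*) p (\<phi> i x) (\<phi> i y)"
      using xy phi s by simp
    finally show ?thesis .
  qed
  have phi_zero: "\<phi> i (frac scale p 0 u) = frac (*) p 0 1" if "u \<notin> p" for i u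
  proof -
    have "\<phi> i (frac scale p 0 u) = frac (*) p 0 (d*u)" using that by (simp add: phi module_hom.zero[OF ghom])
    also have "\<dots> = frac (*) p 0 1" by (rule lp.frac_zero_any[OF R]) (use that dp notin_mult in blast)
    finally show ?thesis .
  qed
  define b where "b j = frac scale p (m j) 1" for j
  define F where "F = {frac scale p (\<Sum>j\<in>{0..<n}. scale (r j) (m j)) u | r u. u \<notin> p}"
  define G where "G = {x \<in> loc scale p. \<forall>i<n. \<phi> i x = frac (*) p 0 1}"
  have inF: "frac scale p (\<Sum>j\<in>{0..<n}. scale (r j) (m j)) u \<in> F" if "u \<notin> p" for r u
    unfolding F_def mem_Collect_eq using that by (intro exI[of _ r] exI[of _ u]) simp
  have Fcases: "P" if "x \<in> F" "\<And>r u. u \<notin> p \<Longrightarrow> x = frac scale p (\<Sum>j\<in>{0..<n}. scale (r j) (m j)) u \<Longrightarrow> P"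
    for x P using that unfolding F_def by blast
  have phiF: "\<phi> i (frac scale p (\<Sum>j\<in>{0..<n}. scale (r j) (m j)) u) = frac (*) p (r i) u"
    if "u \<notin> p" "i < n" for i r u
  proof -
    have "\<phi> i (frac scale p (\<Sum>j\<in>{0..<n}. scale (r j) (m j)) u) = frac (*) p (r i * d) (d * u)"
      using that by (simp add: phi gsum)
    also have "\<dots> = frac (*) p (r i) u"
      by (rule lp.frac_eqI[OF R]) (use that dp notin_mult in \<open>auto simp: mult_ac\<close>)
    finally show ?thesis .
  qed
  have FL: "F \<subseteq> loc scale p" using frac_in_loc unfolding F_def by blast
  have GL: "G \<subseteq> loc scale p" unfolding G_def by blast
  have bdef: "b = (\<lambda>j. frac scale p (m j) 1)" by (rule ext) (simp add: b_def)
  have zF: "loc_zero scale p \<in> F"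
  proof -
    have "frac scale p (\<Sum>j\<in>{0..<n}. scale 0 (m j)) 1 \<in> F" by (rule inF[OF one_notin])
    then show ?thesis by (simp add: zero_frac sc_distr)
  qed
  have zG: "loc_zero scale p \<in> G"
    unfolding G_def zero_frac using phi_zero[OF one_notin] frac_in_loc[OF one_notin] by blast
  have lcF: "loc_lincomb scale p (\<lambda>j. frac (*) p (r j) u) b n = frac scale p (\<Sum>j\<in>{0..<n}. scale (r j) (m j)) u"
    if "u \<notin> p" for r u
    unfolding bdef by (rule lincomb_common[OF that])
  have sF: "loc_submodule scale p F"
    unfolding loc_submodule_def
  proof (intro conjI ballI)
    show "F \<subseteq> loc scale p" by (rule FL)
    show "loc_zero scale p \<in> F" by (rule zF)
  next
    fix x y assume "x \<in> F" "y \<in> F"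
    then show "loc_add scale p x y \<in> F"
    proof (elim Fcases)
      fix r u r' v assume u: "u \<notin> p" "v \<notin> p" and xy: "x = frac scale p (\<Sum>j\<in>{0..<n}. scale (r j) (m j)) v"
        "y = frac scale p (\<Sum>j\<in>{0..<n}. scale (r' j) (m j)) u"
      have "loc_add scale p x y = frac scale p (\<Sum>j\<in>{0..<n}. scale (u * r j + v * r' j) (m j)) (v * u)"
        unfolding xy add_frac[OF u(2) u(1)] lin_add ..
      then show ?thesis using inF u notin_mult by simp
    qed
  next
    fix a x assume a: "a \<in> loc (*) p" and x: "x \<in> F"
    from a obtain c w where w: "w \<notin> p" "a = frac (*) p c w" by (elim lp.loc_cases[OF R])
    from x show "loc_smul scale p a x \<in> F"
    proof (elim Fcases)
      fix r u assume u: "u \<notin> p" and xe: "x = frac scale p (\<Sum>j\<in>{0..<n}. scale (r j) (m j)) u"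
      have "loc_smul scale p a x = frac scale p (\<Sum>j\<in>{0..<n}. scale (c * r j) (m j)) (w * u)"
        unfolding xe w(2) smul_frac[OF w(1) u] lin_scale ..
      then show ?thesis using inF u w notin_mult by simp
    qed
  qed
  have sG: "loc_submodule scale p G"
    unfolding loc_submodule_def
  proof (intro conjI ballI)
    show "G \<subseteq> loc scale p" by (rule GL)
    show "loc_zero scale p \<in> G" by (rule zG)
  next
    fix x y assume x: "x \<in> G" and y: "y \<in> G"
    have xl: "x \<in> loc scale p" and yl: "y \<in> loc scale p" using x y GL by auto
    have "\<phi> i (loc_add scale p x y) = frac (*) p 0 1" if i: "i < n" for i
    proof -
      have "\<phi> i (loc_add scale p x y) = loc_add (*) p (frac (*) p 0 1) (frac (*) p 0 1)"
        using phi_add[OF xl yl] x y i unfolding G_def by simp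
      also have "\<dots> = frac (*) p 0 1" by (simp add: lp.add_frac[OF R one_notin one_notin])
      finally show ?thesis .
    qed
    then show "loc_add scale p x y \<in> G" unfolding G_def using add_in[OF xl yl] by blast
  next
    fix a x assume a: "a \<in> loc (*) p" and x: "x \<in> G"
    from a obtain c w where w: "w \<notin> p" "a = frac (*) p c w" by (elim lp.loc_cases[OF R])
    have xl: "x \<in> loc scale p" using x GL by auto
    from xl obtain mm u where u: "u \<notin> p" and xe: "x = frac scale p mm u" by (elim loc_cases)
    have sm: "loc_smul scale p a x = frac scale p (scale c mm) (w * u)"
      unfolding xe w(2) by (rule smul_frac[OF w(1) u])
    have "\<phi> i (loc_smul scale p a x) = frac (*) p 0 1" if i: "i < n" for i
    proof -
      have "\<phi> i x = frac (*) p 0 1" using x i unfolding G_def by simp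
      then have "frac (*) p (g i mm) (d * u) = frac (*) p 0 1" unfolding xe phi[OF u] .
      then obtain w' where w': "w' \<notin> p" "w' * (1 * g i mm - (d * u) * 0) = 0"
        using lp.frac_eq[OF R, of "d*u" 1] u dp notin_mult one_notin by blast
      have dwu: "d * (w * u) \<notin> p" using dp w u notin_mult by blast
      have "\<phi> i (loc_smul scale p a x) = frac (*) p (c * g i mm) (d * (w * u))"
        unfolding sm phi[OF notin_mult[OF w(1) u]] module_hom.scale[OF ghom] ..
      also have "\<dots> = frac (*) p 0 1"
      proof -
        have e: "w' * g i mm = 0" using w'(2) by simp
        have "w' * (1 * (c * g i mm) - d * (w * u) * 0) = c * (w' * g i mm)" by (simp add: mult_ac)
        then have "w' * (1 * (c * g i mm) - d * (w * u) * 0) = 0" using e by simp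
        then show ?thesis using lp.frac_eq[OF R dwu one_notin] w'(1) by blast
      qed
      finally show ?thesis .
    qed
    then show "loc_smul scale p a x \<in> G" unfolding G_def using smul_in[OF a xl] by blast
  qed
  have int: "F \<inter> G = {loc_zero scale p}"
  proof
    show "{loc_zero scale p} \<subseteq> F \<inter> G" using zF zG by blast
  next
    show "F \<inter> G \<subseteq> {loc_zero scale p}"
    proof
      fix y assume y: "y \<in> F \<inter> G"
      then have yF: "y \<in> F" and yG: "y \<in> G" by auto
      from yF show "y \<in> {loc_zero scale p}"
      proof (elim Fcases)
        fix r u assume u: "u \<notin> p" and ye: "y = frac scale p (\<Sum>j\<in>{0..<n}. scale (r j) (m j)) u"
        have "\<forall>i. \<exists>w. i < n \<longrightarrow> w \<notin> p \<and> w * r i = 0"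
        proof (intro allI)
          fix i show "\<exists>w. i < n \<longrightarrow> w \<notin> p \<and> w * r i = 0"
          proof (cases "i < n")
            case True
            have h1: "\<phi> i (frac scale p (\<Sum>j\<in>{0..<n}. scale (r j) (m j)) u) = frac (*) p 0 1"
              using yG True unfolding G_def ye by simp
            have "frac (*) p (r i) u = frac (*) p 0 1"
              using phiF[OF u True, of r] h1 by simp
            then obtain w where "w \<notin> p" "w * (1 * r i - u * 0) = 0"
              using lp.frac_eq[OF R u one_notin] by blast
            then show ?thesis by (intro exI[of _ w]) simp
          qed simp
        qed
        from choice[OF this] obtain w where w: "\<forall>i. i < n \<longrightarrow> w i \<notin> p \<and> w i * r i = 0" by blast
        define W where "W = prod w {0..<n}"
        have Wp: "W \<notin> p" unfolding W_def by (rule prod_notin) (use w in auto)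
        have Wr: "W * r j = 0" if j: "j < n" for j
        proof -
          have "W = w j * prod w ({0..<n} - {j})" unfolding W_def using j by (simp add: prod.remove)
          moreover have "w j * r j = 0" using w j by blast
          ultimately show ?thesis by (metis mult.commute mult.left_commute mult_zero_right)
        qed
        have "scale W (scale 1 (\<Sum>j\<in>{0..<n}. scale (r j) (m j)) - scale u 0) = (\<Sum>j\<in>{0..<n}. scale (W * r j) (m j))"
          by (simp add: sc_distr lin_scale)
        also have "\<dots> = 0" using Wr by (simp add: sc_distr)
        finally have "frac scale p (\<Sum>j\<in>{0..<n}. scale (r j) (m j)) u = frac scale p 0 1"
          using frac_eq[OF u one_notin] Wp by blast
        then show ?thesis unfolding ye zero_frac by simp
      qed
    qed
  qed
  have dec: "\<forall>x\<in>loc scale p. \<exists>y\<in>F. \<exists>z\<in>G. x = loc_add scale p y z"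
  proof
    fix x assume "x \<in> loc scale p"
    then obtain mm u where u: "u \<notin> p" and xe: "x = frac scale p mm u" by (elim loc_cases)
    define Y where "Y = (\<Sum>j\<in>{0..<n}. scale (g j mm) (m j))"
    define y where "y = frac scale p Y (d * u)"
    define z where "z = frac scale p (scale d mm - Y) (d * u)"
    have du: "d * u \<notin> p" using dp u notin_mult by blast
    have yF: "y \<in> F" unfolding y_def Y_def by (rule inF[OF du])
    have zG: "z \<in> G"
    proof -
      have "\<phi> i z = frac (*) p 0 1" if i: "i < n" for i
      proof -
        have "g i (scale d mm - Y) = d * g i mm - g i mm * d"
          unfolding Y_def module_hom.diff[OF ghom] module_hom.scale[OF ghom] gsum[OF i] ..
        then have "g i (scale d mm - Y) = 0" by (simp add: mult.commute)
        then have "\<phi> i z = frac (*) p 0 (d * (d * u))" unfolding z_def phi[OF du] by simp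
        also have "\<dots> = frac (*) p 0 1"
          by (rule lp.frac_zero_any[OF R]) (use du dp notin_mult in blast)
        finally show ?thesis .
      qed
      moreover have "z \<in> loc scale p" unfolding z_def by (rule frac_in_loc[OF du])
      ultimately show ?thesis unfolding G_def by blast
    qed
    have "loc_add scale p y z = frac scale p (scale (d*u) Y + scale (d*u) (scale d mm - Y)) ((d*u) * (d*u))"
      unfolding y_def z_def by (rule add_frac[OF du du])
    also have "\<dots> = frac scale p (scale (d*u) (scale d mm)) ((d*u) * (d*u))"
      by (simp add: sc_distr(1)[symmetric])
    also have "\<dots> = frac scale p mm u"
    proof (rule frac_eqI)
      show "(d*u) * (d*u) \<notin> p" using notin_mult[OF du du] .
      show "u \<notin> p" by (rule u)
      show "scale u (scale (d*u) (scale d mm)) = scale ((d*u) * (d*u)) mm" by (simp add: sc_distr(3) mult_ac)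
    qed
    finally have "x = loc_add scale p y z" unfolding xe ..
    then show "\<exists>y\<in>F. \<exists>z\<in>G. x = loc_add scale p y z" using yF zG by blast
  qed
  have bF: "\<forall>i<n. b i \<in> F"
  proof (intro allI impI)
    fix i assume i: "i < n"
    have "(\<Sum>j\<in>{0..<n}. scale (if j = i then 1 else 0) (m j)) = (\<Sum>j\<in>{0..<n}. if j = i then m j else 0)"
      by (rule sum.cong) (simp_all add: sc_distr)
    also have "\<dots> = m i" using i by simp
    finally have "frac scale p (m i) 1 = frac scale p (\<Sum>j\<in>{0..<n}. scale (if j = i then 1 else 0) (m j)) 1"
      by simp
    then show "b i \<in> F" unfolding b_def using inF[OF one_notin] by simp
  qed
  have coord: "\<forall>y\<in>F. \<exists>a. (\<forall>i<n. a i \<in> loc (*) p) \<and> y = loc_lincomb scale p a b n"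
  proof
    fix y assume "y \<in> F"
    then show "\<exists>a. (\<forall>i<n. a i \<in> loc (*) p) \<and> y = loc_lincomb scale p a b n"
    proof (elim Fcases)
      fix r u assume u: "u \<notin> p" and ye: "y = frac scale p (\<Sum>j\<in>{0..<n}. scale (r j) (m j)) u"
      show ?thesis
        by (rule exI[of _ "\<lambda>j. frac (*) p (r j) u"]) (simp add: ye lcF[OF u] lp.frac_in_loc[OF R u])
    qed
  qed
  have uniq: "\<forall>a a'. (\<forall>i<n. a i \<in> loc (*) p \<and> a' i \<in> loc (*) p) \<longrightarrow>
           loc_lincomb scale p a b n = loc_lincomb scale p a' b n \<longrightarrow> (\<forall>i<n. a i = a' i)"
  proof (intro allI impI)
    fix a a' i assume A: "\<forall>i<n. a i \<in> loc (*) p \<and> a' i \<in> loc (*) p"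
      and eq: "loc_lincomb scale p a b n = loc_lincomb scale p a' b n" and i: "i < n"
    have "\<exists>r u. u \<notin> p \<and> (\<forall>i<n. a i = frac (*) p (r i) u)" using A by (intro common_denom) auto
    then obtain r u where u: "u \<notin> p" and r: "\<forall>i<n. a i = frac (*) p (r i) u" by blast
    have "\<exists>r u. u \<notin> p \<and> (\<forall>i<n. a' i = frac (*) p (r i) u)" using A by (intro common_denom) auto
    then obtain r' u' where u': "u' \<notin> p" and r': "\<forall>i<n. a' i = frac (*) p (r' i) u'" by blast
    have l1: "loc_lincomb scale p a b n = frac scale p (\<Sum>j\<in>{0..<n}. scale (r j) (m j)) u"
      using lincomb_cong[of n a "\<lambda>j. frac (*) p (r j) u" b b] r lcF[OF u] by simp
    have l2: "loc_lincomb scale p a' b n = frac scale p (\<Sum>j\<in>{0..<n}. scale (r' j) (m j)) u'"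
      using lincomb_cong[of n a' "\<lambda>j. frac (*) p (r' j) u'" b b] r' lcF[OF u'] by simp
    have "a i = \<phi> i (frac scale p (\<Sum>j\<in>{0..<n}. scale (r j) (m j)) u)" using phiF[OF u i] r i by simp
    also have "\<dots> = \<phi> i (frac scale p (\<Sum>j\<in>{0..<n}. scale (r' j) (m j)) u')" using l1 l2 eq by simp
    also have "\<dots> = a' i" using phiF[OF u' i] r' i by simp
    finally show "a i = a' i" .
  qed
  have phiE: "\<forall>i<n. \<phi> i \<in> loc_dual scale p E"
  proof (intro allI impI)
    fix i assume "i < n"
    show "\<phi> i \<in> loc_dual scale p E" unfolding loc_dual_def mem_Collect_eq
      by (rule bexI[of _ "g i"], rule exI[of _ d]) (use dp phi gE in auto)
  qed
  have proj: "\<forall>x\<in>loc scale p. \<forall>y\<in>F. \<forall>z\<in>G. x = loc_add scale p y z \<longrightarrow>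
           y = loc_lincomb scale p (\<lambda>i. \<phi> i x) b n"
  proof (intro ballI impI)
    fix x y z assume x: "x \<in> loc scale p" and yF: "y \<in> F" and zG: "z \<in> G" and xe: "x = loc_add scale p y z"
    have yl: "y \<in> loc scale p" and zl: "z \<in> loc scale p" using yF zG FL GL by auto
    from yF show "y = loc_lincomb scale p (\<lambda>i. \<phi> i x) b n"
    proof (elim Fcases)
      fix r u assume u: "u \<notin> p" and ye: "y = frac scale p (\<Sum>j\<in>{0..<n}. scale (r j) (m j)) u"
      have "\<phi> i x = frac (*) p (r i) u" if i: "i < n" for i
      proof -
        have "\<phi> i x = loc_add (*) p (\<phi> i y) (\<phi> i z)" unfolding xe by (rule phi_add[OF yl zl])
        also have "\<dots> = loc_add (*) p (frac (*) p (r i) u) (frac (*) p 0 1)"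
          using phiF[OF u i] zG i unfolding ye G_def by simp
        also have "\<dots> = frac (*) p (r i) u"
          by (simp add: lp.add_frac[OF R u one_notin])
        finally show ?thesis .
      qed
      then have "loc_lincomb scale p (\<lambda>i. \<phi> i x) b n = loc_lincomb scale p (\<lambda>j. frac (*) p (r j) u) b n"
        by (intro lincomb_cong) auto
      then show ?thesis using lcF[OF u] ye by simp
    qed
  qed
  have Fspan: "F \<subseteq> loc_span scale p S"
  proof
    fix y assume "y \<in> F"
    then show "y \<in> loc_span scale p S"
    proof (elim Fcases)
      fix r u assume u: "u \<notin> p" and ye: "y = frac scale p (\<Sum>j\<in>{0..<n}. scale (r j) (m j)) u"
      have "(\<Sum>j\<in>{0..<n}. scale (r j) (m j)) \<in> module.span scale S"
        by (rule module.span_sum[OF md], rule module.span_scale[OF md]) (use mS in auto)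
      then show ?thesis unfolding loc_span_def ye using u by blast
    qed
  qed
  have fes: "free_E_summand scale p E n F"
    unfolding free_E_summand_def
    by (rule exI[of _ G], rule exI[of _ b], rule exI[of _ \<phi>]) (intro conjI sF sG int dec bF coord uniq phiE proj)
  show ?thesis using fes Fspan by blast
qed

end



lemma delta_props:
  fixes scale :: "'a::comm_ring_1 \<Rightarrow> 'm::ab_group_add \<Rightarrow> 'm" and S :: "'m set" and E p
  assumes md: "module scale" and pr: "prime_ideal p" and fg: "finitely_generated scale"
    and dE: "dual_submodule scale E"
  defines "P \<equiv> \<lambda>n. \<exists>F. free_E_summand scale p E n F \<and> F \<subseteq> loc_span scale p S"
  shows "P (delta scale E p S)" "\<And>n. P n \<Longrightarrow> n \<le> delta scale E p S"
proof -
  interpret lp scale p by (rule lp.intro[OF md pr])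
  obtain G0 where fG: "finite G0" and sp: "module.span scale G0 = UNIV"
    using fg unfolding finitely_generated_def by blast
  have P0: "P 0" unfolding P_def
    by (rule construct[OF dE, of 0]) (simp_all add: one_notin)
  have bound: "n \<le> card G0" if Pn: "P n" for n
  proof (rule ccontr)
    assume big: "\<not> n \<le> card G0"
    obtain F where F: "free_E_summand scale p E n F" "F \<subseteq> loc_span scale p S"
      using Pn unfolding P_def by blast
    obtain f m c W where fm: "\<forall>i<n. f i \<in> E" "\<forall>j<n. m j \<in> module.span scale S" "W \<notin> p"
      "\<forall>i<n. c i \<notin> p" "\<forall>i<n. \<forall>j<n. W * f i (m j) = (if i = j then W * c i else 0)"
      using extract_data[OF F] by blast
    have "det (mat n n (\<lambda>(i,j). f i (m j))) \<notin> p"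
      using det_notin[OF pr fm(3) fm(4), of "\<lambda>i j. f i (m j)"] fm(5) by simp
    moreover have "det (mat n n (\<lambda>(i,j). f i (m j))) = 0"
      by (rule det_zero_big[OF md fG sp]) (use fm(1) dual_hom[OF dE] big in auto)
    ultimately show False using zero_in by simp
  qed
  have "P (Greatest P)" by (rule GreatestI_nat[where P=P, OF P0 bound])
  then show "P (delta scale E p S)" unfolding delta_def P_def by simp
  show "n \<le> delta scale E p S" if "P n" for n
    using Greatest_le_nat[where P=P, OF that bound] unfolding delta_def P_def by simp
qed

theorem lemma4p1:
  fixes scale :: "'a::comm_ring_1 \<Rightarrow> 'm::ab_group_add \<Rightarrow> 'm"
    and X :: "'a set set" and E :: "('m \<Rightarrow> 'a) set" and S :: "'m set" and t :: nat
  assumes "module scale"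
    and "noetherian_ring TYPE('a)"
    and "finitely_generated scale"
    and "basic_set X"
    and "dual_submodule scale E"
  shows "zariski_closed_in X {p \<in> X. delta scale E p S \<le> t}"
proof -
  note md = assms(1) and fg = assms(3) and dE = assms(5)
  have prX: "prime_ideal p" if "p \<in> X" for p
    using assms(4) that unfolding basic_set_def Spec_def by blast
  define J where "J = {det (mat (Suc t) (Suc t) (\<lambda>(i,j). f i (m j))) | f m.
     (\<forall>i<Suc t. f i \<in> E) \<and> (\<forall>j<Suc t. m j \<in> module.span scale S)}"
  have "{p \<in> X. delta scale E p S \<le> t} = {p \<in> X. J \<subseteq> p}"
  proof (intro Collect_cong conj_cong refl iffI)
    fix p assume pX: "p \<in> X" and dl: "delta scale E p S \<le> t"
    note pr = prX[OF pX]
    interpret lp scale p by (rule lp.intro[OF md pr])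
    show "J \<subseteq> p"
    proof
      fix x assume "x \<in> J"
      then obtain f m where x: "x = det (mat (Suc t) (Suc t) (\<lambda>(i,j). f i (m j)))"
        and fm: "\<forall>i<Suc t. f i \<in> E" "\<forall>j<Suc t. m j \<in> module.span scale S"
        unfolding J_def by blast
      show "x \<in> p"
      proof (rule ccontr)
        assume "x \<notin> p"
        then have "\<exists>F. free_E_summand scale p E (Suc t) F \<and> F \<subseteq> loc_span scale p S"
          using construct[OF dE fm] x by simp
        then have "Suc t \<le> delta scale E p S" by (rule delta_props(2)[OF md pr fg dE])
        then show False using dl by simp
      qed
    qed
  next
    fix p assume pX: "p \<in> X" and Jp: "J \<subseteq> p"
    note pr = prX[OF pX]
    interpret lp scale p by (rule lp.intro[OF md pr])
    show "delta scale E p S \<le> t"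
    proof (rule ccontr)
      assume "\<not> delta scale E p S \<le> t"
      then have le: "Suc t \<le> delta scale E p S" by simp
      obtain F where F: "free_E_summand scale p E (delta scale E p S) F" "F \<subseteq> loc_span scale p S"
        using delta_props(1)[OF md pr fg dE] by blast
      obtain f m c W where fm: "\<forall>i<delta scale E p S. f i \<in> E"
        "\<forall>j<delta scale E p S. m j \<in> module.span scale S" "W \<notin> p"
        "\<forall>i<delta scale E p S. c i \<notin> p"
        "\<forall>i<delta scale E p S. \<forall>j<delta scale E p S. W * f i (m j) = (if i = j then W * c i else 0)"
        using extract_data[OF F] by blast
      have c': "\<forall>i<Suc t. c i \<notin> p" using fm(4) le by auto
      have A': "\<forall>i<Suc t. \<forall>j<Suc t. W * f i (m j) = (if i = j then W * c i else 0)"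
        using fm(5) le by auto
      have "det (mat (Suc t) (Suc t) (\<lambda>(i,j). f i (m j))) \<notin> p"
        using det_notin[OF pr fm(3) c', of "\<lambda>i j. f i (m j)"] A' by simp
      moreover have "det (mat (Suc t) (Suc t) (\<lambda>(i,j). f i (m j))) \<in> J"
        unfolding J_def mem_Collect_eq by (intro exI[of _ f] exI[of _ m]) (use fm(1,2) le in auto)
      ultimately show False using Jp by blast
    qed
  qed
  then show ?thesis unfolding zariski_closed_in_def by blast
qed



end
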